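(* Let $p$ be a prime, $m,t\ge1$, $R^t=\mathbb{F}_{p^m}[u]/\langle u^t\rangle$, $\omega(x)=\omega_0(x)+u\omega_1(x)+\dots+u^{t-1}\omega_{t-1}(x)\in R^t[x]$ with $\omega_i(x)\in\mathbb{F}_{p^m}[x]$, and $R^{t,\omega}=R^t[x]/\langle\omega(x)\rangle$. Let $\omega_0(x)=v_1(x)^{n_1}v_2(x)^{n_2}\cdots v_l(x)^{n_l}$ be the factorization of $\omega_0(x)$ into irreducible polynomials $v_i(x)\in\mathbb{F}_{p^m}[x]$ with positive integers $n_i$. Then every ideal of $R^{t,\omega}$ not contained in $\langle u\rangle$ can be expressed as $$\langle v_1(x)^{k_1}v_2(x)^{k_2}\cdots v_l(x)^{k_l}+u\,r(x)\rangle+J,$$ where $r(x)\in R^{t,\omega}$, $J$ is an ideal of $R^{t,\omega}$ contained in $\langle u\rangle$, and $0\le k_i\le n_i$ for $1\le i\le l$, not all $k_i=n_i$.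
   Context: Elements of $\mathbb{F}_{p^m}[x]$ are regarded as elements of $R^{t,\omega}$ via the natural inclusion $\mathbb{F}_{p^m}\subseteq R^t$. *)

theory Defs
  imports "HOL-Computational_Algebra.Polynomial"
    "HOL-Computational_Algebra.Factorial_Ring" "HOL-Algebra.QuotRing"
begin

definition tring :: "('b::comm_ring_1) ring" where
  "tring = \<lparr>carrier = UNIV, mult = (*), one = 1, zero = 0, add = (+)\<rparr>"

text \<open>Bivariate polynomials over F: the type 'a poly poly, outer variable x,
  inner variable u (coefficients of x-powers are polynomials in u).\<close>

definition uvar :: "('a::comm_ring_1) poly poly" where
  "uvar = [:[:0, 1:]:]"

definition emb :: "('a::comm_ring_1) poly \<Rightarrow> 'a poly poly" where
  "emb f = map_poly (\<lambda>c. [:c:]) f"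

definition omega :: "nat \<Rightarrow> (nat \<Rightarrow> ('a::comm_ring_1) poly) \<Rightarrow> 'a poly poly" where
  "omega t w = (\<Sum>i<t. uvar ^ i * emb (w i))"

text \<open>The ideal (u^t, omega) of F[u][x]; R^{t,omega} = R^t[x]/(omega) is
  (canonically) F[u][x]/(u^t, omega).\<close>
definition defideal :: "nat \<Rightarrow> (nat \<Rightarrow> ('a::comm_ring_1) poly) \<Rightarrow> 'a poly poly set" where
  "defideal t w = Idl\<^bsub>tring\<^esub> {uvar ^ t, omega t w}"

definition Rtw :: "nat \<Rightarrow> (nat \<Rightarrow> ('a::comm_ring_1) poly) \<Rightarrow> ('a poly poly set) ring" where
  "Rtw t w = tring Quot defideal t w"

definition cls :: "nat \<Rightarrow> (nat \<Rightarrow> ('a::comm_ring_1) poly) \<Rightarrow> 'a poly poly \<Rightarrow> 'a poly poly set" where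
  "cls t w f = defideal t w +>\<^bsub>tring\<^esub> f"

end

theory Submission
  imports Defs
begin

definition red :: "('a::comm_ring_1) poly poly \<Rightarrow> 'a poly" where
  "red f = map_poly (\<lambda>c. coeff c 0) f"

lemma coeff_red: "coeff (red f) i = coeff (coeff f i) 0"
  by (simp add: red_def coeff_map_poly)

lemma red_add: "red (f + g) = red f + red g"
  by (rule poly_eqI) (simp add: coeff_red)

lemma red_diff: "red (f - g) = red f - red g"
  by (rule poly_eqI) (simp add: coeff_red)

lemma red_mult: "red (f * g) = red f * red g"
  by (rule poly_eqI) (simp add: coeff_red coeff_mult coeff_sum coeff_mult_0)

lemma red_one: "red 1 = 1"
  by (rule poly_eqI) (simp add: coeff_red coeff_1)

lemma red_pow: "red (f ^ n) = red f ^ n"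
  by (induction n) (simp_all add: red_one red_mult)

lemma red_sum: "red (\<Sum>i\<in>A. f i) = (\<Sum>i\<in>A. red (f i))"
  by (rule poly_eqI) (simp add: coeff_red coeff_sum)

lemma red_uvar: "red uvar = 0"
  by (rule poly_eqI) (simp add: coeff_red uvar_def coeff_pCons split: nat.splits)

lemma red_emb: "red (emb g) = g"
  by (rule poly_eqI) (simp add: coeff_red emb_def coeff_map_poly)

lemma red_omega: "t \<ge> 1 \<Longrightarrow> red (omega t w) = w 0"
proof -
  assume "t \<ge> 1"
  then have "{..<t} = insert 0 {1..<t}" by auto
  then show ?thesis
    apply (simp add: omega_def red_sum red_mult red_pow red_uvar red_emb red_add)
    apply (rule sum.neutral)
    apply (simp add: power_0_left)
    done
qed

lemma red_zero: "red (f::('a::field) poly poly) = 0 \<Longrightarrow> \<exists>q. f = uvar * q"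
proof -
  assume h: "red f = 0"
  define q where "q = map_poly (\<lambda>c. c div [:0, 1:]) f"
  have "f = uvar * q"
  proof (rule poly_eqI)
    fix i
    have "coeff (coeff f i) 0 = 0" using h by (metis coeff_red coeff_0)
    then have "[:0, 1:] dvd coeff f i" by (simp add: dvd_iff_poly_eq_0 poly_0_coeff_0)
    then have "coeff f i = [:0, 1:] * (coeff f i div [:0, 1:])" by (rule dvd_mult_div_cancel[symmetric])
    also have "\<dots> = pCons 0 (coeff f i div [:0, 1:])" by (simp add: mult_pCons_left)
    finally show "coeff f i = coeff (uvar * q) i"
      by (simp add: uvar_def q_def coeff_map_poly)
  qed
  then show ?thesis by blast
qed

lemma tring_cring: "cring (tring :: ('b::comm_ring_1) ring)"
  apply (rule cringI)
    apply (rule abelian_groupI)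
         apply (auto simp: tring_def algebra_simps)
    apply (metis add.right_inverse)
   apply (rule comm_monoidI)
      apply (auto simp: tring_def algebra_simps)
  done

lemma tring_simps [simp]: "carrier tring = UNIV" "x \<oplus>\<^bsub>tring\<^esub> y = x + y"
  "x \<otimes>\<^bsub>tring\<^esub> y = x * y" "\<zero>\<^bsub>tring\<^esub> = 0" "\<one>\<^bsub>tring\<^esub> = 1"
  by (simp_all add: tring_def)


definition comax :: "'b::comm_ring_1 \<Rightarrow> 'b \<Rightarrow> bool" where
  "comax x y \<longleftrightarrow> (\<exists>a b. a * x + b * y = 1)"

lemma comax_sym: "comax x y \<Longrightarrow> comax y x"
  unfolding comax_def by (metis add.commute)

lemma comax_mult: "comax x y \<Longrightarrow> comax x z \<Longrightarrow> comax x (y * z)"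
proof -
  assume "comax x y" "comax x z"
  then obtain a b c d where h: "a * x + b * y = 1" "c * x + d * z = 1" unfolding comax_def by blast
  have "(a * x + b * y) * (c * x + d * z) = 1" using h by simp
  then have "(a * c * x + a * d * z + b * y * c) * x + (b * d) * (y * z) = 1"
    by (simp add: algebra_simps)
  then show ?thesis unfolding comax_def by blast
qed

lemma comax_one: "comax x 1"
  unfolding comax_def by (rule exI[of _ 0], rule exI[of _ 1]) simp

lemma comax_pow: "comax x y \<Longrightarrow> comax x (y ^ m)"
  by (induction m) (simp_all add: comax_one comax_mult)

lemma comax_pow2: "comax x y \<Longrightarrow> comax (x ^ a) (y ^ b)"
  by (metis comax_pow comax_sym)

lemma comax_prod: "finite A \<Longrightarrow> (\<forall>i\<in>A. comax x (g i)) \<Longrightarrow> comax x (prod g A)"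
  by (induction A rule: finite_induct) (simp_all add: comax_one comax_mult)

lemma comax_dvd: "comax x y \<Longrightarrow> x dvd f \<Longrightarrow> y dvd f \<Longrightarrow> x * y dvd f"
proof -
  assume "comax x y" "x dvd f" "y dvd f"
  then obtain a b where h1: "a * x + b * y = 1" unfolding comax_def by blast
  obtain c where h2: "f = x * c" using \<open>x dvd f\<close> by (auto elim!: dvdE)
  obtain d where h3: "f = y * d" using \<open>y dvd f\<close> by (auto elim!: dvdE)
  note h = h1 h2 h3
  have "f = (a * x + b * y) * f" using h by simp
  also have "\<dots> = a * x * f + b * y * f" by (simp add: distrib_right)
  also have "a * x * f = x * y * (a * d)" by (subst h3) (simp add: ac_simps)
  also have "b * y * f = x * y * (b * c)" by (subst h2) (simp add: ac_simps)
  also have "x * y * (a * d) + x * y * (b * c) = x * y * (a * d + b * c)" by (simp add: distrib_left)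
  finally show ?thesis by (metis dvd_triv_left)
qed

lemma prod_dvd_comax:
  fixes g :: "nat \<Rightarrow> ('b::comm_ring_1)"
  assumes "finite A" "\<forall>i\<in>A. \<forall>j\<in>A. i \<noteq> j \<longrightarrow> comax (g i) (g j)"
    "\<forall>i\<in>A. g i dvd f"
  shows "prod g A dvd f"
  using assms
proof (induction A rule: finite_induct)
  case empty
  then show ?case by simp
next
  case (insert x F)
  have "comax (g x) (prod g F)"
    by (rule comax_prod) (use insert in auto)
  then show ?case using insert by (simp add: comax_dvd)
qed

lemma irr_comax:
  fixes v g :: "('a::field) poly"
  assumes irr: "irreducible v" and nd: "\<not> v dvd g"
  shows "comax v g"
proof -
  define S where "S = {a * v + b * g | a b. True}"
  have Sv: "v \<in> S" unfolding S_def by (rule CollectI, rule exI[of _ 1], rule exI[of _ 0]) simp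
  have v0: "v \<noteq> 0" using irr by auto
  obtain d where d: "d \<in> S \<and> d \<noteq> 0" and dmin: "\<forall>y. y \<in> S \<and> y \<noteq> 0 \<longrightarrow> degree d \<le> degree y"
    using ex_has_least_nat[of "\<lambda>d. d \<in> S \<and> d \<noteq> 0" v degree] Sv v0 by blast
  obtain a0 b0 where ab0: "d = a0 * v + b0 * g" using d unfolding S_def by blast
  have dd: "d dvd y" if yS: "y \<in> S" for y
  proof -
    obtain a1 b1 where ab1: "y = a1 * v + b1 * g" using yS unfolding S_def by blast
    have "y mod d = y - y div d * d" by (simp add: minus_div_mult_eq_mod)
    also have "\<dots> = (a1 - y div d * a0) * v + (b1 - y div d * b0) * g"
      unfolding ab1 ab0 by (simp add: algebra_simps)
    finally have "y mod d \<in> S" unfolding S_def by blast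
    have "y mod d = 0"
    proof (rule ccontr)
      assume nz: "y mod d \<noteq> 0"
      then have "degree d \<le> degree (y mod d)" using dmin \<open>y mod d \<in> S\<close> by blast
      moreover have "degree (y mod d) < degree d" using degree_mod_less'[of d y] d nz by blast
      ultimately show False by linarith
    qed
    then show ?thesis by (simp add: dvd_eq_mod_eq_0)
  qed
  have "d dvd v" using dd Sv by blast
  moreover have "g \<in> S" unfolding S_def by (rule CollectI, rule exI[of _ 0], rule exI[of _ 1]) simp
  then have dg: "d dvd g" using dd by blast
  ultimately obtain q where q: "v = d * q" by (auto elim!: dvdE)
  have "d dvd 1"
  proof (rule ccontr)
    assume "\<not> d dvd 1"
    then have "q dvd 1" using irreducibleD[OF irr q] by blast
    then have "v dvd d" using q by (metis dvd_mult_unit_iff dvd_refl)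
    then show False using dg nd dvd_trans by blast
  qed
  then obtain d' where "1 = d * d'" by (auto elim!: dvdE)
  then have "(d' * a0) * v + (d' * b0) * g = 1" unfolding ab0 by (simp add: algebra_simps)
  then show ?thesis unfolding comax_def by blast
qed

lemma decomp:
  fixes v f :: "('a::field) poly"
  assumes irr: "irreducible v" and f0: "f \<noteq> 0"
  shows "\<exists>e f'. f = v ^ e * f' \<and> \<not> v dvd f'"
  using f0
proof (induction "degree f" arbitrary: f rule: less_induct)
  case less
  show ?case
  proof (cases "v dvd f")
    case False
    then show ?thesis by (metis mult_1 power_0)
  next
    case True
    then obtain g where g: "f = v * g" by (auto elim!: dvdE)
    have v0: "v \<noteq> 0" using irr by auto
    have g0: "g \<noteq> 0" using g less.prems by auto
    have "degree v \<noteq> 0" using irr v0 is_unit_iff_degree[of v] by (auto simp: irreducible_def)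
    then have "degree g < degree f" using g degree_mult_eq[OF v0 g0] by simp
    then obtain e f' where "g = v ^ e * f'" "\<not> v dvd f'" using less.hyps g0 by blast
    then have "f = v ^ Suc e * f'" using g by simp
    then show ?thesis using \<open>\<not> v dvd f'\<close> by blast
  qed
qed

lemma key_min:
  fixes v :: "nat \<Rightarrow> ('a::field) poly" and G :: "'a poly set"
  assumes pr: "\<forall>i<l. irreducible (v i)"
    and Gadd: "\<And>x y. x \<in> G \<Longrightarrow> y \<in> G \<Longrightarrow> x + y \<in> G"
    and Gmult: "\<And>x h. x \<in> G \<Longrightarrow> h * x \<in> G"
    and kK: "(\<forall>i<l. k i \<le> n i) \<and> (\<Prod>i<l. v i ^ k i) \<in> G"
    and kmin: "\<And>k'. (\<forall>i<l. k' i \<le> n i) \<and> (\<Prod>i<l. v i ^ k' i) \<in> G \<Longrightarrow>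
         (\<Sum>i<l. k i) \<le> (\<Sum>i<l. k' i)"
    and fG: "f \<in> G" and il: "i < l"
  shows "v i ^ k i dvd f"
proof (rule ccontr)
  assume nd: "\<not> v i ^ k i dvd f"
  have pi: "irreducible (v i)" using pr il by blast
  have "f \<noteq> 0" using nd by auto
  then obtain e f' where f': "f = v i ^ e * f'" "\<not> v i dvd f'"
    using decomp[OF pi] by blast
  have ek: "e < k i"
  proof (rule ccontr)
    assume "\<not> e < k i"
    then have "v i ^ k i dvd v i ^ e" by (simp add: le_imp_power_dvd)
    then show False using nd f'(1) by (metis dvd_mult2)
  qed
  have cop: "comax (v i ^ (k i - e)) f'"
    using comax_pow2[OF irr_comax[OF pi f'(2)], of "k i - e" 1] by simp
  then obtain a b where ab: "a * v i ^ (k i - e) + b * f' = 1" unfolding comax_def by blast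
  define M where "M = (\<Prod>j\<in>{..<l}-{i}. v j ^ k j)"
  have Pk: "(\<Prod>j<l. v j ^ k j) = v i ^ k i * M"
    unfolding M_def using il by (simp add: prod.remove)
  define k' where "k' = k(i := e)"
  have Pk': "(\<Prod>j<l. v j ^ k' j) = v i ^ e * M"
  proof -
    have "(\<Prod>j<l. v j ^ k' j) = v i ^ k' i * (\<Prod>j\<in>{..<l}-{i}. v j ^ k' j)"
      using il by (simp add: prod.remove)
    also have "(\<Prod>j\<in>{..<l}-{i}. v j ^ k' j) = M"
      unfolding M_def k'_def by (rule prod.cong) auto
    finally show ?thesis by (simp add: k'_def)
  qed
  have vk: "v i ^ k i = v i ^ e * v i ^ (k i - e)"
    using ek by (simp flip: power_add)
  have "b * (M * f) + a * (\<Prod>j<l. v j ^ k j) = v i ^ e * M * (a * v i ^ (k i - e) + b * f')"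
    unfolding Pk vk f'(1) by (simp add: algebra_simps)
  also have "\<dots> = (\<Prod>j<l. v j ^ k' j)" using ab Pk' by simp
  finally have inG: "(\<Prod>j<l. v j ^ k' j) \<in> G"
    by (metis Gadd Gmult fG kK)
  have "\<forall>j<l. k' j \<le> n j" using kK ek by (auto simp: k'_def)
  with inG have "(\<Sum>j<l. k j) \<le> (\<Sum>j<l. k' j)" using kmin by blast
  moreover have "(\<Sum>j<l. k' j) < (\<Sum>j<l. k j)"
  proof -
    have "(\<Sum>j<l. k' j) = k' i + (\<Sum>j\<in>{..<l}-{i}. k' j)" using il by (simp add: sum.remove)
    also have "(\<Sum>j\<in>{..<l}-{i}. k' j) = (\<Sum>j\<in>{..<l}-{i}. k j)"
      unfolding k'_def by (rule sum.cong) auto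
    also have "(\<Sum>j<l. k j) = k i + (\<Sum>j\<in>{..<l}-{i}. k j)" using il by (simp add: sum.remove)
    ultimately show ?thesis using ek by (simp add: k'_def)
  qed
  ultimately show False by linarith
qed

theorem lemma3p1:
  fixes p m t l :: nat
    and w :: "nat \<Rightarrow> ('a::{field,finite}) poly"
    and v :: "nat \<Rightarrow> 'a poly"
    and n :: "nat \<Rightarrow> nat"
    and I :: "'a poly poly set set"
  assumes "prime p" and "m \<ge> 1" and "t \<ge> 1" and "card (UNIV :: 'a set) = p ^ m"
    and "w 0 = (\<Prod>i<l. v i ^ n i)"
    and "\<forall>i<l. Factorial_Ring.irreducible (v i)"
    and "\<forall>i<l. n i \<ge> 1"
    and "\<forall>i<l. \<forall>j<l. i \<noteq> j \<longrightarrow> \<not> v i dvd v j"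
    and "ideal I (Rtw t w)"
    and "\<not> I \<subseteq> PIdl\<^bsub>Rtw t w\<^esub> (cls t w uvar)"
  shows "\<exists>k r J. (\<forall>i<l. k i \<le> n i) \<and> (\<exists>i<l. k i \<noteq> n i)
    \<and> r \<in> carrier (Rtw t w) \<and> ideal J (Rtw t w)
    \<and> J \<subseteq> PIdl\<^bsub>Rtw t w\<^esub> (cls t w uvar)
    \<and> I = (PIdl\<^bsub>Rtw t w\<^esub> (cls t w (emb (\<Prod>i<l. v i ^ k i))
              \<oplus>\<^bsub>Rtw t w\<^esub> (cls t w uvar \<otimes>\<^bsub>Rtw t w\<^esub> r)))
           <+>\<^bsub>Rtw t w\<^esub> J"
proof -
  note w0 = assms(5) and irr = assms(6) and ndv = assms(8) and Iid = assms(9) and nsub = assms(10)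
  have cr: "cring (tring :: 'a poly poly ring)" by (rule tring_cring)
  interpret T: cring "tring :: 'a poly poly ring" by (rule cr)
  define D where "D = defideal t w"
  have Did: "ideal D tring" unfolding D_def defideal_def by (rule T.genideal_ideal) simp
  interpret Dl: ideal D tring by (rule Did)
  have Rdef: "Rtw t w = tring Quot D" by (simp add: Rtw_def D_def)
  have clsd: "cls t w = (\<lambda>f. D +>\<^bsub>tring\<^esub> f)" by (simp add: cls_def D_def fun_eq_iff)
  interpret Q: cring "Rtw t w" unfolding Rdef by (rule Dl.quotient_is_cring[OF cr])
  interpret Il: ideal I "Rtw t w" by (rule Iid)
  have hom: "cls t w \<in> ring_hom tring (Rtw t w)" unfolding Rdef clsd by (rule Dl.rcos_ring_hom)
  have c_add: "cls t w (f + g) = cls t w f \<oplus>\<^bsub>Rtw t w\<^esub> cls t w g" for f g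
    using ring_hom_add[OF hom, of f g] by simp
  have c_mult: "cls t w (f * g) = cls t w f \<otimes>\<^bsub>Rtw t w\<^esub> cls t w g" for f g
    using ring_hom_mult[OF hom, of f g] by simp
  have c_car: "cls t w f \<in> carrier (Rtw t w)" for f
    using ring_hom_closed[OF hom, of f] by simp
  have c_surj: "\<exists>f. x = cls t w f" if "x \<in> carrier (Rtw t w)" for x
    using that unfolding Rdef clsd by (auto simp: FactRing_def A_RCOSETS_def')
  have c_zero: "cls t w d = \<zero>\<^bsub>Rtw t w\<^esub>" if "d \<in> D" for d
    unfolding Rdef clsd using Dl.a_rcos_const[OF that] by (simp add: FactRing_def)
  have omD: "omega t w \<in> D" unfolding D_def defideal_def
    using T.genideal_self[of "{uvar ^ t, omega t w}"] by auto
  define I' where "I' = {f. cls t w f \<in> I}"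
  have I'add: "f + g \<in> I'" if "f \<in> I'" "g \<in> I'" for f g
    using that unfolding I'_def by (simp add: c_add Il.a_closed)
  have I'mult: "h * f \<in> I'" if "f \<in> I'" for f h
    using that unfolding I'_def by (simp add: c_mult Il.I_l_closed c_car)
  have omI': "omega t w \<in> I'" unfolding I'_def using c_zero[OF omD] by simp
  define G where "G = red ` I'"
  have Gadd: "x + y \<in> G" if xG: "x \<in> G" and yG: "y \<in> G" for x y
  proof -
    obtain f where f: "f \<in> I'" "x = red f" using xG unfolding G_def by blast
    obtain g where g: "g \<in> I'" "y = red g" using yG unfolding G_def by blast
    have "x + y = red (f + g)" by (simp add: red_add f g)
    then show ?thesis using I'add[OF f(1) g(1)] unfolding G_def by blast
  qed
  have Gmult: "h * x \<in> G" if xG: "x \<in> G" for x h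
  proof -
    obtain f where f: "f \<in> I'" "x = red f" using xG unfolding G_def by blast
    have "red (emb h * f) = h * x" by (simp add: red_mult red_emb f)
    then show ?thesis using I'mult[OF f(1)] unfolding G_def by (metis image_eqI)
  qed
  have w0G: "w 0 \<in> G" unfolding G_def using omI' red_omega[OF assms(3)] by (metis image_eqI)
  define P where "P = (\<lambda>k. \<Prod>i<l. v i ^ k i)"
  define K where "K = (\<lambda>k. (\<forall>i<l. k i \<le> n i) \<and> P k \<in> G)"
  have "K n" unfolding K_def P_def using w0G w0 by simp
  then obtain k where kK: "K k" and kmin: "\<forall>k'. K k' \<longrightarrow> (\<Sum>i<l. k i) \<le> (\<Sum>i<l. k' i)"
    using ex_has_least_nat[of K n "\<lambda>k. \<Sum>i<l. k i"] by blast
  have Pdvd: "P k dvd f" if "f \<in> G" for f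
  proof -
    have "\<forall>i\<in>{..<l}. v i ^ k i dvd f"
      using key_min[of l v G k n f] irr Gadd Gmult kK kmin that unfolding K_def P_def by blast
    moreover have "\<forall>i\<in>{..<l}. \<forall>j\<in>{..<l}. i \<noteq> j \<longrightarrow> comax (v i ^ k i) (v j ^ k j)"
      using irr ndv irr_comax comax_pow2 by blast
    ultimately show ?thesis unfolding P_def by (intro prod_dvd_comax) auto
  qed
  have notall: "\<exists>i<l. k i \<noteq> n i"
  proof (rule ccontr)
    assume "\<not> (\<exists>i<l. k i \<noteq> n i)"
    then have "P k = w 0" unfolding P_def w0 by (intro prod.cong) auto
    have "I \<subseteq> PIdl\<^bsub>Rtw t w\<^esub> (cls t w uvar)"
    proof
      fix x assume xI: "x \<in> I"
      then obtain f where f: "x = cls t w f" using c_surj Il.a_subset by blast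
      then have "f \<in> I'" using xI unfolding I'_def by simp
      then have "w 0 dvd red f" using Pdvd \<open>P k = w 0\<close> unfolding G_def by auto
      then obtain h where h: "red f = w 0 * h" by (auto elim!: dvdE)
      have "red (f - emb h * omega t w) = 0"
        by (simp add: red_diff red_mult red_emb red_omega[OF assms(3)] h)
      then obtain q where q: "f - emb h * omega t w = uvar * q" using red_zero by blast
      then have "f = emb h * omega t w + uvar * q" by (simp add: algebra_simps)
      then have "x = cls t w q \<otimes>\<^bsub>Rtw t w\<^esub> cls t w uvar"
        using f by (simp add: c_add c_mult c_zero[OF omD] c_car Q.m_comm)
      then show "x \<in> PIdl\<^bsub>Rtw t w\<^esub> (cls t w uvar)"
        unfolding cgenideal_def using c_car by blast
    qed
    then show False using nsub by simp
  qed
  have "P k \<in> G" using kK unfolding K_def by simp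
  then obtain a where a: "a \<in> I'" "red a = P k" unfolding G_def by (metis imageE)
  have "red (a - emb (P k)) = 0" by (simp add: red_diff red_emb a)
  then obtain q where q: "a - emb (P k) = uvar * q" using red_zero by blast
  then have aq: "a = emb (P k) + uvar * q" by (simp add: algebra_simps)
  define r where "r = cls t w q"
  define J where "J = I \<inter> PIdl\<^bsub>Rtw t w\<^esub> (cls t w uvar)"
  have ca: "cls t w a = cls t w (emb (P k)) \<oplus>\<^bsub>Rtw t w\<^esub> (cls t w uvar \<otimes>\<^bsub>Rtw t w\<^esub> r)"
    unfolding aq r_def by (simp add: c_add c_mult)
  have Jid: "ideal J (Rtw t w)" unfolding J_def
    by (rule Q.i_intersect[OF Iid Q.cgenideal_ideal[OF c_car]])
  have eq: "I = PIdl\<^bsub>Rtw t w\<^esub> (cls t w a) <+>\<^bsub>Rtw t w\<^esub> J"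
  proof
    show "PIdl\<^bsub>Rtw t w\<^esub> (cls t w a) <+>\<^bsub>Rtw t w\<^esub> J \<subseteq> I"
    proof
      fix x assume "x \<in> PIdl\<^bsub>Rtw t w\<^esub> (cls t w a) <+>\<^bsub>Rtw t w\<^esub> J"
      then obtain y j where yj: "y \<in> carrier (Rtw t w)" "j \<in> J"
        "x = y \<otimes>\<^bsub>Rtw t w\<^esub> cls t w a \<oplus>\<^bsub>Rtw t w\<^esub> j"
        unfolding set_add_def' cgenideal_def by blast
      have "cls t w a \<in> I" using a unfolding I'_def by simp
      then show "x \<in> I" using yj unfolding J_def by (simp add: Il.a_closed Il.I_l_closed)
    qed
  next
    show "I \<subseteq> PIdl\<^bsub>Rtw t w\<^esub> (cls t w a) <+>\<^bsub>Rtw t w\<^esub> J"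
    proof
      fix x assume xI: "x \<in> I"
      then obtain f where f: "x = cls t w f" using c_surj Il.a_subset by blast
      then have fI: "f \<in> I'" using xI unfolding I'_def by simp
      then have "P k dvd red f" using Pdvd unfolding G_def by auto
      then obtain h where h: "red f = P k * h" by (auto elim!: dvdE)
      have "red (f - emb h * a) = 0"
        by (simp add: red_diff red_mult red_emb a h)
      then obtain q' where q': "f - emb h * a = uvar * q'" using red_zero by blast
      have "f - emb h * a = f + (- emb h) * a" by simp
      then have "f - emb h * a \<in> I'" using I'add I'mult fI a(1) by metis
      then have yI: "cls t w (uvar * q') \<in> I" using q' unfolding I'_def by simp
      have yP: "cls t w (uvar * q') \<in> PIdl\<^bsub>Rtw t w\<^esub> (cls t w uvar)"
      proof -
        have "cls t w (uvar * q') = cls t w q' \<otimes>\<^bsub>Rtw t w\<^esub> cls t w uvar"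
          by (simp add: c_mult Q.m_comm[OF c_car c_car])
        then show ?thesis unfolding cgenideal_def using c_car by blast
      qed
      have "f = emb h * a + uvar * q'" using q' by (simp add: algebra_simps)
      then have "x = cls t w (emb h) \<otimes>\<^bsub>Rtw t w\<^esub> cls t w a \<oplus>\<^bsub>Rtw t w\<^esub> cls t w (uvar * q')"
        using f by (simp add: c_add c_mult)
      moreover have "cls t w (emb h) \<otimes>\<^bsub>Rtw t w\<^esub> cls t w a \<in> PIdl\<^bsub>Rtw t w\<^esub> (cls t w a)"
        unfolding cgenideal_def using c_car by blast
      moreover have "cls t w (uvar * q') \<in> J" using yI yP unfolding J_def by blast
      ultimately show "x \<in> PIdl\<^bsub>Rtw t w\<^esub> (cls t w a) <+>\<^bsub>Rtw t w\<^esub> J"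
        unfolding set_add_def' by blast
    qed
  qed
  have c1: "\<forall>i<l. k i \<le> n i" using kK unfolding K_def by simp
  have c3: "r \<in> carrier (Rtw t w)" unfolding r_def by (rule c_car)
  have c5: "J \<subseteq> PIdl\<^bsub>Rtw t w\<^esub> (cls t w uvar)" unfolding J_def by blast
  have c6: "I = PIdl\<^bsub>Rtw t w\<^esub> (cls t w (emb (\<Prod>i<l. v i ^ k i)) \<oplus>\<^bsub>Rtw t w\<^esub>
        (cls t w uvar \<otimes>\<^bsub>Rtw t w\<^esub> r)) <+>\<^bsub>Rtw t w\<^esub> J"
      using eq ca unfolding P_def by simp
  show ?thesis
    apply (rule exI[of _ k], rule exI[of _ r], rule exI[of _ J])
    using c1 notall c3 Jid c5 c6 by blast
qed

end
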